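(* Let $\mu$ be a $\sigma$-finite signed measure on a measurable space $(\Omega,\mathcal B)$, and let $\Omega^+,\Omega^-$ be a Hahn decomposition for $\mu$ (disjoint measurable sets with union $\Omega$, $\mu\ge0$ on measurable subsets of $\Omega^+$, $\mu\le0$ on measurable subsets of $\Omega^-$). Writing $\operatorname{range}\lambda=\{\lambda(A):A\in\mathcal B\}$, we have $\operatorname{range}|\mu|=\operatorname{range}\mu-\mu(\Omega^-)$ if $\mu(\Omega^-)>-\infty$, and $\operatorname{range}|\mu|=-\operatorname{range}\mu+\mu(\Omega^+)$ if $\mu(\Omega^+)<+\infty$.
   Context: A $\sigma$-finite signed measure is a countably additive extended-real-valued set function vanishing on $\emptyset$, taking at most one of the values $\pm\infty$, whose total variation $|\mu|$ is $\sigma$-finite. For a set $S\subset\mathbb R\cup\{\pm\infty\}$ and real $c$, $S+c=\{s+c:s\in S\}$ and $-S=\{-s:s\in S\}$. *)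

theory Defs
  imports "HOL-Analysis.Analysis"
begin

text \<open>Signed measures on a measurable space M, given as set functions into the extended
reals (only their values on sets M matter).\<close>

definition countably_additive_signed :: "'a measure \<Rightarrow> ('a set \<Rightarrow> ereal) \<Rightarrow> bool" where
  "countably_additive_signed M \<mu> \<longleftrightarrow>
     (\<forall>A :: nat \<Rightarrow> 'a set. range A \<subseteq> sets M \<longrightarrow> disjoint_family A \<longrightarrow>
        (\<lambda>n. \<Sum>i<n. \<mu> (A i)) \<longlonglongrightarrow> \<mu> (\<Union>i. A i))"

definition signed_measure :: "'a measure \<Rightarrow> ('a set \<Rightarrow> ereal) \<Rightarrow> bool" where
  "signed_measure M \<mu> \<longleftrightarrow>
     \<mu> {} = 0 \<and>
     ((\<forall>A\<in>sets M. \<mu> A \<noteq> \<infinity>) \<or> (\<forall>A\<in>sets M. \<mu> A \<noteq> -\<infinity>)) \<and>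
     countably_additive_signed M \<mu>"

definition signed_total_variation :: "'a measure \<Rightarrow> ('a set \<Rightarrow> ereal) \<Rightarrow> 'a set \<Rightarrow> ereal" where
  "signed_total_variation M \<mu> A =
     Sup {(\<Sum>i<n. \<bar>\<mu> (E i)\<bar>) | (n::nat) E. (\<forall>i<n. E i \<in> sets M) \<and>
            disjoint_family_on E {..<n} \<and> (\<Union>i<n. E i) = A}"

definition sigma_finite_signed_measure :: "'a measure \<Rightarrow> ('a set \<Rightarrow> ereal) \<Rightarrow> bool" where
  "sigma_finite_signed_measure M \<mu> \<longleftrightarrow>
     signed_measure M \<mu> \<and>
     (\<exists>C :: nat \<Rightarrow> 'a set. range C \<subseteq> sets M \<and> (\<Union>i. C i) = space M \<and>
        (\<forall>i. signed_total_variation M \<mu> (C i) \<noteq> \<infinity>))"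

definition hahn_decomposition :: "'a measure \<Rightarrow> ('a set \<Rightarrow> ereal) \<Rightarrow> 'a set \<Rightarrow> 'a set \<Rightarrow> bool" where
  "hahn_decomposition M \<mu> P N \<longleftrightarrow>
     P \<in> sets M \<and> N \<in> sets M \<and> P \<inter> N = {} \<and> P \<union> N = space M \<and>
     (\<forall>A\<in>sets M. A \<subseteq> P \<longrightarrow> \<mu> A \<ge> 0) \<and>
     (\<forall>A\<in>sets M. A \<subseteq> N \<longrightarrow> \<mu> A \<le> 0)"

end

theory Submission
  imports Defs
begin

lemma ereal_neg_sum_nonpos:
  fixes f :: "'b \<Rightarrow> ereal"
  assumes "finite I" "\<And>i. i \<in> I \<Longrightarrow> f i \<le> 0"
  shows "- (\<Sum>i\<in>I. f i) = (\<Sum>i\<in>I. - f i)"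
  using assms
proof (induction I rule: finite_induct)
  case empty then show ?case by simp
next
  case (insert x F)
  have a: "f x \<le> 0" using insert by auto
  have b: "(\<Sum>i\<in>F. f i) \<le> 0" using insert by (meson insertCI sum_nonpos)
  have "- (\<Sum>i\<in>insert x F. f i) = - (f x + (\<Sum>i\<in>F. f i))" using insert by simp
  also have "\<dots> = - f x + - (\<Sum>i\<in>F. f i)" using a b
    by (cases "f x"; cases "\<Sum>i\<in>F. f i") auto
  also have "\<dots> = (\<Sum>i\<in>insert x F. - f i)" using insert by simp
  finally show ?case .
qed

lemma fin_add:
  fixes n :: nat and E :: "nat \<Rightarrow> 'a set"
  assumes sm: "signed_measure M \<mu>" and E: "\<And>i. i < n \<Longrightarrow> E i \<in> sets M"
    and d: "disjoint_family_on E {..<n}"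
  shows "(\<Sum>i<n. \<mu> (E i)) = \<mu> (\<Union>i<n. E i)"
proof -
  define F where "F i = (if i < n then E i else {})" for i :: nat
  have rF: "range F \<subseteq> sets M" using E by (auto simp: F_def)
  have dF: "disjoint_family F" using d
    unfolding disjoint_family_on_def F_def by auto
  have e0: "\<mu> {} = 0" using sm by (simp add: signed_measure_def)
  have ca: "countably_additive_signed M \<mu>" using sm by (simp add: signed_measure_def)
  have lim: "(\<lambda>m. \<Sum>i<m. \<mu> (F i)) \<longlonglongrightarrow> \<mu> (\<Union>i. F i)"
    using ca rF dF unfolding countably_additive_signed_def by blast
  have U: "(\<Union>i. F i) = (\<Union>i<n. E i)" by (auto simp: F_def split: if_splits)
  have ev: "\<forall>\<^sub>F m in sequentially. (\<Sum>i<m. \<mu> (F i)) = (\<Sum>i<n. \<mu> (E i))"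
  proof (rule eventually_sequentiallyI[of n])
    fix m assume "n \<le> m"
    then have "(\<Sum>i<m. \<mu> (F i)) = (\<Sum>i<n. \<mu> (F i))"
      by (intro sum.mono_neutral_right) (auto simp: F_def e0)
    also have "\<dots> = (\<Sum>i<n. \<mu> (E i))" by (simp add: F_def)
    finally show "(\<Sum>i<m. \<mu> (F i)) = (\<Sum>i<n. \<mu> (E i))" .
  qed
  have lim2: "(\<lambda>m. \<Sum>i<m. \<mu> (F i)) \<longlonglongrightarrow> (\<Sum>i<n. \<mu> (E i))"
    using tendsto_eventually[OF ev] .
  show ?thesis using LIMSEQ_unique[OF lim2 lim] U by simp
qed

lemma bin_add:
  assumes sm: "signed_measure M \<mu>" and "A \<in> sets M" "B \<in> sets M" "A \<inter> B = {}"
  shows "\<mu> (A \<union> B) = \<mu> A + \<mu> B"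
proof -
  define E where "E i = (if i = 0 then A else B)" for i :: nat
  have "(\<Sum>i<2. \<mu> (E i)) = \<mu> (\<Union>i<2. E i)"
    by (rule fin_add[OF sm]) (use assms in \<open>auto simp: E_def disjoint_family_on_def\<close>)
  moreover have "(\<Union>i<2. E i) = A \<union> B" unfolding E_def lessThan_nat_numeral by auto
  moreover have "(\<Sum>i<2. \<mu> (E i)) = \<mu> A + \<mu> B"
    unfolding E_def lessThan_nat_numeral by (simp add: add.commute)
  ultimately show ?thesis by simp
qed

lemma tv_eq:
  assumes sm: "signed_measure M \<mu>" and h: "hahn_decomposition M \<mu> P N" and A: "A \<in> sets M"
  shows "signed_total_variation M \<mu> A = \<mu> (A \<inter> P) + - \<mu> (A \<inter> N)"
  unfolding signed_total_variation_def
proof (rule Sup_eqI)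
  have hP: "P \<in> sets M" and hN: "N \<in> sets M" and PN: "P \<inter> N = {}" and PNu: "P \<union> N = space M"
    and pos: "\<And>B. B \<in> sets M \<Longrightarrow> B \<subseteq> P \<Longrightarrow> \<mu> B \<ge> 0"
    and neg: "\<And>B. B \<in> sets M \<Longrightarrow> B \<subseteq> N \<Longrightarrow> \<mu> B \<le> 0"
    using h by (auto simp: hahn_decomposition_def)
  have Asp: "A \<subseteq> space M" using A sets.sets_into_space by blast
  {
    fix y assume "y \<in> {(\<Sum>i<n. \<bar>\<mu> (E i)\<bar>) | (n::nat) E. (\<forall>i<n. E i \<in> sets M) \<and>
            disjoint_family_on E {..<n} \<and> (\<Union>i<n. E i) = A}"
    then obtain n :: nat and E where y: "y = (\<Sum>i<n. \<bar>\<mu> (E i)\<bar>)" and E: "\<forall>i<n. E i \<in> sets M"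
      and d: "disjoint_family_on E {..<n}" and U: "(\<Union>i<n. E i) = A" by blast
    have ESP: "\<And>i. i < n \<Longrightarrow> E i \<inter> P \<in> sets M" using E hP by auto
    have ESN: "\<And>i. i < n \<Longrightarrow> E i \<inter> N \<in> sets M" using E hN by auto
    have "\<bar>\<mu> (E i)\<bar> \<le> \<mu> (E i \<inter> P) + - \<mu> (E i \<inter> N)" if i: "i < n" for i
    proof -
      have "E i = (E i \<inter> P) \<union> (E i \<inter> N)" using E i PNu sets.sets_into_space by blast
      then have "\<mu> (E i) = \<mu> (E i \<inter> P) + \<mu> (E i \<inter> N)"
        using bin_add[OF sm ESP[OF i] ESN[OF i]] PN by auto
      moreover have "\<mu> (E i \<inter> P) \<ge> 0" using pos ESP i by blast
      moreover have "\<mu> (E i \<inter> N) \<le> 0" using neg ESN i by blast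
      ultimately show ?thesis
        by (cases "\<mu> (E i \<inter> P)"; cases "\<mu> (E i \<inter> N)") auto
    qed
    then have "y \<le> (\<Sum>i<n. \<mu> (E i \<inter> P) + - \<mu> (E i \<inter> N))"
      unfolding y by (intro sum_mono) auto
    also have "\<dots> = (\<Sum>i<n. \<mu> (E i \<inter> P)) + (\<Sum>i<n. - \<mu> (E i \<inter> N))"
      by (simp add: sum.distrib)
    also have "(\<Sum>i<n. - \<mu> (E i \<inter> N)) = - (\<Sum>i<n. \<mu> (E i \<inter> N))"
      using neg ESN by (intro ereal_neg_sum_nonpos[symmetric]) auto
    also have "(\<Sum>i<n. \<mu> (E i \<inter> N)) = \<mu> (\<Union>i<n. E i \<inter> N)"
      using d ESN by (intro fin_add[OF sm]) (auto simp: disjoint_family_on_def)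
    also have "(\<Union>i<n. E i \<inter> N) = A \<inter> N" using U by blast
    also have "(\<Sum>i<n. \<mu> (E i \<inter> P)) = \<mu> (\<Union>i<n. E i \<inter> P)"
      using d ESP by (intro fin_add[OF sm]) (auto simp: disjoint_family_on_def)
    also have "(\<Union>i<n. E i \<inter> P) = A \<inter> P" using U by blast
    finally show "y \<le> \<mu> (A \<inter> P) + - \<mu> (A \<inter> N)" .
  }
  note ub = this
  fix y assume hy: "\<And>z. z \<in> {(\<Sum>i<n. \<bar>\<mu> (E i)\<bar>) | (n::nat) E. (\<forall>i<n. E i \<in> sets M) \<and>
            disjoint_family_on E {..<n} \<and> (\<Union>i<n. E i) = A} \<Longrightarrow> z \<le> y"
  define E where "E i = (if i = 0 then A \<inter> P else A \<inter> N)" for i :: nat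
  have "(\<Sum>i<2. \<bar>\<mu> (E i)\<bar>) \<le> y"
  proof (rule hy, intro CollectI exI conjI)
    show "\<forall>i<2. E i \<in> sets M" using A hP hN by (auto simp: E_def)
    show "disjoint_family_on E {..<2}" using PN
      by (auto simp: E_def disjoint_family_on_def)
    show "(\<Union>i<2. E i) = A" unfolding E_def lessThan_nat_numeral using Asp PNu by auto
  qed simp
  moreover have "(\<Sum>i<2. \<bar>\<mu> (E i)\<bar>) = \<mu> (A \<inter> P) + - \<mu> (A \<inter> N)"
  proof -
    have "\<mu> (A \<inter> P) \<ge> 0" using pos A hP by auto
    moreover have "\<mu> (A \<inter> N) \<le> 0" using neg A hN by auto
    ultimately show ?thesis unfolding E_def lessThan_nat_numeral
      by (cases "\<mu> (A \<inter> P)"; cases "\<mu> (A \<inter> N)") (auto simp: add.commute)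
  qed
  ultimately show "\<mu> (A \<inter> P) + - \<mu> (A \<inter> N) \<le> y" by simp
qed

lemma alg1:
  fixes a b c :: ereal
  assumes "a \<ge> 0" "b \<le> 0" "c \<le> 0" "b + c = ereal r"
  shows "a + - b = (a + c) - (b + c)"
  using assms by (cases a; cases b; cases c) auto

lemma alg2:
  fixes a b c :: ereal
  assumes "a \<ge> 0" "b \<le> 0" "c \<ge> 0" "a + c = ereal r"
  shows "-(c + b) + (a + c) = a + - b"
  using assms by (cases a; cases b; cases c) auto

theorem lemma1p2:
  fixes M :: "'a measure" and \<mu> :: "'a set \<Rightarrow> ereal" and P N :: "'a set"
  assumes "sigma_finite_signed_measure M \<mu>"
    and "hahn_decomposition M \<mu> P N"
  shows "(\<mu> N > -\<infinity> \<longrightarrow>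
           signed_total_variation M \<mu> ` sets M = (\<lambda>x. x - \<mu> N) ` (\<mu> ` sets M)) \<and>
         (\<mu> P < \<infinity> \<longrightarrow>
           signed_total_variation M \<mu> ` sets M = (\<lambda>x. - x + \<mu> P) ` (\<mu> ` sets M))"
proof -
  have sm: "signed_measure M \<mu>" using assms(1) by (simp add: sigma_finite_signed_measure_def)
  note h = assms(2)
  have hP: "P \<in> sets M" and hN: "N \<in> sets M" and PN: "P \<inter> N = {}" and PNu: "P \<union> N = space M"
    and pos: "\<And>B. B \<in> sets M \<Longrightarrow> B \<subseteq> P \<Longrightarrow> \<mu> B \<ge> 0"
    and neg: "\<And>B. B \<in> sets M \<Longrightarrow> B \<subseteq> N \<Longrightarrow> \<mu> B \<le> 0"
    using h by (auto simp: hahn_decomposition_def)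
  let ?tv = "signed_total_variation M \<mu>"
  have tv: "?tv A = \<mu> (A \<inter> P) + - \<mu> (A \<inter> N)" if "A \<in> sets M" for A
    using tv_eq[OF sm h that] .
  have sp: "A \<subseteq> space M" if "A \<in> sets M" for A using that sets.sets_into_space by blast
  have add: "\<mu> (X \<union> Y) = \<mu> X + \<mu> Y" if "X \<in> sets M" "Y \<in> sets M" "X \<inter> Y = {}" for X Y
    using bin_add[OF sm that] .
  have split: "\<mu> A = \<mu> (A \<inter> P) + \<mu> (A \<inter> N)" if A: "A \<in> sets M" for A
  proof -
    have "A = (A \<inter> P) \<union> (A \<inter> N)" using sp[OF A] PNu by blast
    then show ?thesis using add[of "A \<inter> P" "A \<inter> N"] A hP hN PN by auto
  qed
  have splitN: "\<mu> N = \<mu> (A \<inter> N) + \<mu> (N - A)" if A: "A \<in> sets M" for A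
  proof -
    have "N = (A \<inter> N) \<union> (N - A)" by blast
    then show ?thesis using add[of "A \<inter> N" "N - A"] A hN by auto
  qed
  have splitP: "\<mu> P = \<mu> (A \<inter> P) + \<mu> (P - A)" if A: "A \<in> sets M" for A
  proof -
    have "P = (A \<inter> P) \<union> (P - A)" by blast
    then show ?thesis using add[of "A \<inter> P" "P - A"] A hP by auto
  qed
  have part1: "?tv ` sets M = (\<lambda>x. x - \<mu> N) ` (\<mu> ` sets M)" if fin: "\<mu> N > -\<infinity>"
  proof -
    obtain r where r: "\<mu> N = ereal r" using fin neg[OF hN] by (cases "\<mu> N") auto
    define T where "T A = (A \<inter> P) \<union> (N - A)" for A
    have T: "T A \<in> sets M" "\<mu> (T A) = \<mu> (A \<inter> P) + \<mu> (N - A)"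
      "T A \<inter> P = A \<inter> P" "T A \<inter> N = N - A" if A: "A \<in> sets M" for A
    proof -
      show "T A \<in> sets M" using A hP hN by (auto simp: T_def)
      show "\<mu> (T A) = \<mu> (A \<inter> P) + \<mu> (N - A)" unfolding T_def
        using add[of "A \<inter> P" "N - A"] A hP hN PN by auto
      show "T A \<inter> P = A \<inter> P" "T A \<inter> N = N - A" using PN by (auto simp: T_def)
    qed
    show ?thesis
    proof (intro equalityI subsetI)
      fix x assume "x \<in> ?tv ` sets M"
      then obtain A where A: "A \<in> sets M" and x: "x = ?tv A" by blast
      have "x = \<mu> (T A) - \<mu> N"
        unfolding x tv[OF A] T(2)[OF A] splitN[OF A]
        by (rule alg1[where r=r]) (use A hP hN pos neg splitN[OF A] r in auto)
      then show "x \<in> (\<lambda>x. x - \<mu> N) ` (\<mu> ` sets M)" using T(1)[OF A] by blast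
    next
      fix x assume "x \<in> (\<lambda>x. x - \<mu> N) ` (\<mu> ` sets M)"
      then obtain A where A: "A \<in> sets M" and x: "x = \<mu> A - \<mu> N" by blast
      have "x = ?tv (T A)"
        unfolding x tv[OF T(1)[OF A]] T(3,4)[OF A] split[OF A] splitN[OF A]
        using alg1[of "\<mu> (A \<inter> P)" "\<mu> (N - A)" "\<mu> (A \<inter> N)" r] A hP hN pos neg splitN[OF A] r
        by (auto simp: add.commute)
      then show "x \<in> ?tv ` sets M" using T(1)[OF A] by blast
    qed
  qed
  have part2: "?tv ` sets M = (\<lambda>x. - x + \<mu> P) ` (\<mu> ` sets M)" if fin: "\<mu> P < \<infinity>"
  proof -
    obtain r where r: "\<mu> P = ereal r" using fin pos[OF hP] by (cases "\<mu> P") auto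
    define T where "T A = (P - A) \<union> (A \<inter> N)" for A
    have T: "T A \<in> sets M" "\<mu> (T A) = \<mu> (P - A) + \<mu> (A \<inter> N)"
      "T A \<inter> P = P - A" "T A \<inter> N = A \<inter> N" if A: "A \<in> sets M" for A
    proof -
      show "T A \<in> sets M" using A hP hN by (auto simp: T_def)
      show "\<mu> (T A) = \<mu> (P - A) + \<mu> (A \<inter> N)" unfolding T_def
        using add[of "P - A" "A \<inter> N"] A hP hN PN by auto
      show "T A \<inter> P = P - A" "T A \<inter> N = A \<inter> N" using PN by (auto simp: T_def)
    qed
    show ?thesis
    proof (intro equalityI subsetI)
      fix x assume "x \<in> ?tv ` sets M"
      then obtain A where A: "A \<in> sets M" and x: "x = ?tv A" by blast
      have "x = - \<mu> (T A) + \<mu> P"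
        unfolding x tv[OF A] T(2)[OF A] splitP[OF A]
        using alg2[of "\<mu> (A \<inter> P)" "\<mu> (A \<inter> N)" "\<mu> (P - A)" r] A hP hN pos neg splitP[OF A] r
        by auto
      then show "x \<in> (\<lambda>x. - x + \<mu> P) ` (\<mu> ` sets M)" using T(1)[OF A] by blast
    next
      fix x assume "x \<in> (\<lambda>x. - x + \<mu> P) ` (\<mu> ` sets M)"
      then obtain A where A: "A \<in> sets M" and x: "x = - \<mu> A + \<mu> P" by blast
      have "x = ?tv (T A)"
        unfolding x tv[OF T(1)[OF A]] T(3,4)[OF A] split[OF A] splitP[OF A]
        using alg2[of "\<mu> (P - A)" "\<mu> (A \<inter> N)" "\<mu> (A \<inter> P)" r] A hP hN pos neg splitP[OF A] r
        by (auto simp: add.commute)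
      then show "x \<in> ?tv ` sets M" using T(1)[OF A] by blast
    qed
  qed
  show ?thesis using part1 part2 by blast
qed

end
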